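(* Fix integers $K>1$, $M>1$, a cost $C\ge 0$, and $\delta\in(0,1)$. For every problem instance $\boldsymbol{\mu}=[\mu_{k,m}]\in\mathbb{R}^{K\times M}$ having a unique local best arm $k_m^*$ at every client $m$ and a unique global best arm $k^*$, the algorithm FedElim (run with confidence parameter $\delta$) terminates with outputs $(\hat k_1^*,\dots,\hat k_M^*,\hat k^* )$ satisfying $$P_{\boldsymbol{\mu}}\big((\hat k_1^*,\dots,\hat k_M^*,\hat k^* )=(k_1^*,\dots,k_M^*,k^* )\big)\ge 1-\delta,$$ i.e. FedElim is $\delta$-PAC.
   Context: Setting: there are $M$ clients and a server; each client $m\in[M]$ has $K$ arms indexed by $[K]=\{1,\dots,K\}$. For each pair $(k,m)$, arm $k$ of client $m$ produces rewards $X_{k,m}(1),X_{k,m}(2),\dots$ that are i.i.d. Gaussian with unknown mean $\mu_{k,m}$ and variance $1$, independent across pairs. The $i$-th pull of arm $k$ at client $m$ reveals $X_{k,m}(i)$. Write $\hat\mu_{k,m}(n)=\frac1n\sum_{i=1}^n X_{k,m}(i)$ and $\hat\mu_k(n)=\frac1M\sum_{m=1}^M\hat\mu_{k,m}(n)$. Local best arm: $k_m^*=\arg\max_k\mu_{k,m}$; global mean $\mu_k=\frac1M\sum_m\mu_{k,m}$ and global best arm $k^*=\arg\max_k\mu_k$ (both assumed unique). Confidence parameters: $\alpha_{\mathrm l}(n)=\sqrt{2\ln(8KMn^2/\delta)/n}$ and $\alpha_{\mathrm g}(n)=\sqrt{2\ln(8Kn^2/\delta)/(Mn)}$. Algorithm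 FedElim (and its variant FedElim0). Initialize $\mathcal S_{\mathrm l,m}=[K]$ for every $m$ and $\mathcal S_{\mathrm g}=[K]$. For $n=1,2,\dots$: (i) for each client $m$: let $\mathcal S_m=\mathcal S_{\mathrm l,m}\cup\mathcal S_{\mathrm g}$; if $|\mathcal S_m|>1$, pull each arm in $\mathcal S_m$ once (so every active arm has been pulled $n$ times and its empirical mean is $\hat\mu_{k,m}(n)$). If $|\mathcal S_{\mathrm l,m}|>1$, remove from $\mathcal S_{\mathrm l,m}$ every $k$ with $\max_{j\in\mathcal S_{\mathrm l,m}}\hat\mu_{j,m}(n)-\hat\mu_{k,m}(n)\ge 2\alpha_{\mathrm l}(n)$. If then $|\mathcal S_{\mathrm l,m}|=1$, output its element as $\hat k_m^*$ and set $\mathcal S_{\mathrm l,m}=\emptyset$. (ii) Communication: if $|\mathcal S_{\mathrm g}|>1$ and $n$ is a communication time step — for FedElim this means $n=2^t$ for some integer $t\ge0$; for FedElim0 every $n$ is a communication time step — then each client $m$ sends the scalars $\hat\mu_{k,m}(n)$, $k\in\mathcal S_{\mathrm g}$, to the server, each scalar sent costing $C$; the server removes from $\mathcal S_{\mathrm g}$ every $k$ with $\max_{j\in\mathcal S_{\mathrm g}}\hat\mu_j(n)-\hat\mu_k(n)\ge 2\alpha_{\mathrm g}(n)$. If $|\mathcal S_{\mathrm g}|=1$, output its element as $\hat k^*$ and set $\mathcal S_{\mathrm g}=\emptyset$. (iii) Terminate once $\mathcal S_{\mathrm l,m}\cup\mathcal S_{\mathrm g}=\emptyset$ for all $m$.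 An algorithm is $\delta$-PAC if for every such instance $\boldsymbol\mu$ it outputs the correct vector $(k_1^*,\dots,k_M^*,k^* )$ with probability at least $1-\delta$. *)

theory Defs
  imports "HOL-Probability.Probability"
begin

text \<open>Arms are indexed by 0..K-1, clients by 0..M-1. A sample point omega assigns to
  (k, m, i) the reward of the (i+1)-th pull of arm k at client m.\<close>

definition reward_space :: "nat \<Rightarrow> nat \<Rightarrow> (nat \<Rightarrow> nat \<Rightarrow> real) \<Rightarrow> (nat \<times> nat \<times> nat \<Rightarrow> real) measure" where
  "reward_space K M mu =
     PiM ({..<K} \<times> {..<M} \<times> UNIV) (\<lambda>(k, m, i). density lborel (normal_density (mu k m) 1))"

definition emp_mean :: "(nat \<times> nat \<times> nat \<Rightarrow> real) \<Rightarrow> nat \<Rightarrow> nat \<Rightarrow> nat \<Rightarrow> real" where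
  "emp_mean \<omega> k m n = (\<Sum>i<n. \<omega> (k, m, i)) / real n"

definition glob_emp_mean :: "nat \<Rightarrow> (nat \<times> nat \<times> nat \<Rightarrow> real) \<Rightarrow> nat \<Rightarrow> nat \<Rightarrow> real" where
  "glob_emp_mean M \<omega> k n = (\<Sum>m<M. emp_mean \<omega> k m n) / real M"

definition alpha_l :: "nat \<Rightarrow> nat \<Rightarrow> real \<Rightarrow> nat \<Rightarrow> real" where
  "alpha_l K M \<delta> n = sqrt (2 * ln (8 * real K * real M * (real n)^2 / \<delta>) / real n)"

definition alpha_g :: "nat \<Rightarrow> nat \<Rightarrow> real \<Rightarrow> nat \<Rightarrow> real" where
  "alpha_g K M \<delta> n = sqrt (2 * ln (8 * real K * (real n)^2 / \<delta>) / (real M * real n))"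

definition elim_step :: "nat set \<Rightarrow> (nat \<Rightarrow> real) \<Rightarrow> real \<Rightarrow> nat set \<times> nat option" where
  "elim_step S f a =
     (if card S > 1 then
        (let S' = {k \<in> S. \<not> (Max (f ` S) - f k \<ge> 2 * a)} in
         if card S' = 1 then ({}, Some (the_elem S')) else (S', None))
      else (S, None))"

record fe_state =
  loc_set :: "nat \<Rightarrow> nat set"
  glob_set :: "nat set"
  loc_out :: "nat \<Rightarrow> nat option"
  glob_out :: "nat option"

definition fe_init :: "nat \<Rightarrow> fe_state" where
  "fe_init K = \<lparr>loc_set = (\<lambda>m. {..<K}), glob_set = {..<K}, loc_out = (\<lambda>m. None), glob_out = None\<rparr>"

text \<open>Every arm active at round n has been pulled exactly n times, so its empirical mean is
  the mean of its first n rewards.\<close>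
definition fe_round :: "(nat \<Rightarrow> bool) \<Rightarrow> nat \<Rightarrow> nat \<Rightarrow> real \<Rightarrow> (nat \<times> nat \<times> nat \<Rightarrow> real)
    \<Rightarrow> nat \<Rightarrow> fe_state \<Rightarrow> fe_state" where
  "fe_round comm K M \<delta> \<omega> n s =
     (let loc = (\<lambda>m. elim_step (loc_set s m) (\<lambda>k. emp_mean \<omega> k m n) (alpha_l K M \<delta> n));
          s1 = s\<lparr>loc_set := (\<lambda>m. fst (loc m)),
                 loc_out := (\<lambda>m. case snd (loc m) of None \<Rightarrow> loc_out s m | Some k \<Rightarrow> Some k)\<rparr>
      in if comm n \<and> card (glob_set s1) > 1 then
           (let g = elim_step (glob_set s1) (\<lambda>k. glob_emp_mean M \<omega> k n) (alpha_g K M \<delta> n)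
            in s1\<lparr>glob_set := fst g,
                  glob_out := (case snd g of None \<Rightarrow> glob_out s1 | Some k \<Rightarrow> Some k)\<rparr>)
         else s1)"

fun fe_state_after :: "(nat \<Rightarrow> bool) \<Rightarrow> nat \<Rightarrow> nat \<Rightarrow> real \<Rightarrow> (nat \<times> nat \<times> nat \<Rightarrow> real)
    \<Rightarrow> nat \<Rightarrow> fe_state" where
  "fe_state_after comm K M \<delta> \<omega> 0 = fe_init K"
| "fe_state_after comm K M \<delta> \<omega> (Suc n) =
     fe_round comm K M \<delta> \<omega> (Suc n) (fe_state_after comm K M \<delta> \<omega> n)"

definition fedelim_comm :: "nat \<Rightarrow> bool" where
  "fedelim_comm n = (\<exists>t. n = 2 ^ t)"

definition fedelim_correct :: "nat \<Rightarrow> nat \<Rightarrow> real \<Rightarrow> (nat \<Rightarrow> nat) \<Rightarrow> nat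
    \<Rightarrow> (nat \<times> nat \<times> nat \<Rightarrow> real) \<Rightarrow> bool" where
  "fedelim_correct K M \<delta> kl kg \<omega> =
     (\<exists>n. let s = fe_state_after fedelim_comm K M \<delta> \<omega> n in
          (\<forall>m<M. loc_set s m = {}) \<and> glob_set s = {} \<and>
          (\<forall>m<M. loc_out s m = Some (kl m)) \<and> glob_out s = Some kg)"

end

theory Submission
  imports Defs "HOL-Real_Asymp.Real_Asymp"
begin

lemma elim_step_small: "\<not> 1 < card S \<Longrightarrow> elim_step S f a = (S, None)"
  by (simp add: elim_step_def)

lemma loc_set_Suc: "loc_set (fe_state_after c K M \<delta> \<omega> (Suc n)) m =
  fst (elim_step (loc_set (fe_state_after c K M \<delta> \<omega> n) m) (\<lambda>k. emp_mean \<omega> k m (Suc n)) (alpha_l K M \<delta> (Suc n)))"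
  by (simp add: fe_round_def Let_def)

lemma loc_out_Suc: "loc_out (fe_state_after c K M \<delta> \<omega> (Suc n)) m =
  (case snd (elim_step (loc_set (fe_state_after c K M \<delta> \<omega> n) m) (\<lambda>k. emp_mean \<omega> k m (Suc n)) (alpha_l K M \<delta> (Suc n)))
   of None \<Rightarrow> loc_out (fe_state_after c K M \<delta> \<omega> n) m | Some k \<Rightarrow> Some k)"
  by (simp add: fe_round_def Let_def)

lemma glob_set_Suc: "glob_set (fe_state_after c K M \<delta> \<omega> (Suc n)) =
  (if c (Suc n) then fst (elim_step (glob_set (fe_state_after c K M \<delta> \<omega> n)) (\<lambda>k. glob_emp_mean M \<omega> k (Suc n)) (alpha_g K M \<delta> (Suc n)))
   else glob_set (fe_state_after c K M \<delta> \<omega> n))"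
  by (auto simp add: fe_round_def Let_def elim_step_small)

lemma glob_out_Suc: "glob_out (fe_state_after c K M \<delta> \<omega> (Suc n)) =
  (if c (Suc n) then (case snd (elim_step (glob_set (fe_state_after c K M \<delta> \<omega> n)) (\<lambda>k. glob_emp_mean M \<omega> k (Suc n)) (alpha_g K M \<delta> (Suc n)))
     of None \<Rightarrow> glob_out (fe_state_after c K M \<delta> \<omega> n) | Some k \<Rightarrow> Some k)
   else glob_out (fe_state_after c K M \<delta> \<omega> n))"
  by (auto simp add: fe_round_def Let_def elim_step_small split: option.split)

lemma ev_small:
  fixes \<alpha> :: "nat \<Rightarrow> real"
  assumes "\<alpha> \<longlonglongrightarrow> 0" "finite J" "\<forall>j\<in>J. 0 < g j"
  shows "\<exists>N0. \<forall>n\<ge>N0. \<forall>j\<in>J. 4 * \<alpha> n \<le> g j"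
proof -
  have "\<forall>\<^sub>F n in sequentially. \<forall>j\<in>J. \<alpha> n < g j / 4"
    using assms by (intro eventually_ball_finite ballI order_tendstoD(2)[OF assms(1)]) auto
  then show ?thesis unfolding eventually_sequentially by (metis less_eq_real_def mult.commute pos_less_divide_eq zero_less_numeral)
qed

lemma alpha_l_lim:
  assumes "K > 0" "M > 0" "\<delta> > 0"
  shows "alpha_l K M \<delta> \<longlonglongrightarrow> 0"
proof -
  have c: "8 * real K * real M / \<delta> > 0" using assms by simp
  have "(\<lambda>n::nat. sqrt (2 * ln ((8 * real K * real M / \<delta>) * (real n)^2) / (1 * real n))) \<longlonglongrightarrow> 0"
    using c by real_asymp
  moreover have "alpha_l K M \<delta> = (\<lambda>n::nat. sqrt (2 * ln ((8 * real K * real M / \<delta>) * (real n)^2) / (1 * real n)))"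
    by (auto simp: alpha_l_def fun_eq_iff)
  ultimately show ?thesis by simp
qed

lemma alpha_g_lim:
  assumes "K > 0" "M > 0" "\<delta> > 0"
  shows "alpha_g K M \<delta> \<longlonglongrightarrow> 0"
proof -
  have c: "8 * real K / \<delta> > 0" "real M > 0" using assms by simp_all
  have "(\<lambda>n::nat. sqrt (2 * ln ((8 * real K / \<delta>) * (real n)^2) / (real M * real n))) \<longlonglongrightarrow> 0"
    using c by real_asymp
  moreover have "alpha_g K M \<delta> = (\<lambda>n::nat. sqrt (2 * ln ((8 * real K / \<delta>) * (real n)^2) / (real M * real n)))"
    by (auto simp: alpha_g_def fun_eq_iff)
  ultimately show ?thesis by simp
qed




lemma best_kept:
  fixes f v :: "nat \<Rightarrow> real" and a :: real
  assumes fin: "finite S" and bS: "b \<in> S"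
    and close: "\<forall>k\<in>S. \<bar>f k - v k\<bar> < a"
    and best: "\<forall>k\<in>S. k \<noteq> b \<longrightarrow> v k < v b"
  shows "\<not> 2 * a \<le> Max (f ` S) - f b"
proof -
  have ne: "S \<noteq> {}" using bS by auto
  have "Max (f ` S) \<in> f ` S" using fin ne by simp
  then obtain j where j: "j \<in> S" "Max (f ` S) = f j" by auto
  show ?thesis
  proof (cases "j = b")
    case True
    have "0 \<le> \<bar>f b - v b\<bar>" by simp
    then have "0 < a" using close bS by force
    then show ?thesis using j True by simp
  next
    case False
    then have "v j < v b" using best j by auto
    moreover have "\<bar>f j - v j\<bar> < a" "\<bar>f b - v b\<bar> < a" using close j bS by auto
    ultimately show ?thesis using j by linarith
  qed
qed

lemma elim_step_good:
  fixes f v :: "nat \<Rightarrow> real" and a :: real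
  assumes fin: "finite S" and bS: "b \<in> S" and card: "1 < card S"
    and close: "\<forall>k\<in>S. \<bar>f k - v k\<bar> < a"
    and best: "\<forall>k\<in>S. k \<noteq> b \<longrightarrow> v k < v b"
  shows "(fst (elim_step S f a) = {} \<and> snd (elim_step S f a) = Some b) \<or>
         (snd (elim_step S f a) = None \<and> b \<in> fst (elim_step S f a) \<and>
          fst (elim_step S f a) \<subseteq> S \<and> 1 < card (fst (elim_step S f a)))"
proof -
  define S' where "S' = {k \<in> S. \<not> (Max (f ` S) - f k \<ge> 2 * a)}"
  have bS': "b \<in> S'" using best_kept[OF fin bS close best] bS by (simp add: S'_def)
  have sub: "S' \<subseteq> S" by (auto simp: S'_def)
  have finS': "finite S'" using sub fin finite_subset by blast
  have e: "elim_step S f a = (if card S' = 1 then ({}, Some (the_elem S')) else (S', None))"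
    using card by (simp add: elim_step_def S'_def Let_def)
  show ?thesis
  proof (cases "card S' = 1")
    case True
    then obtain x where "S' = {x}" by (auto simp: card_Suc_eq)
    then have "S' = {b}" using bS' by auto
    then show ?thesis using e by simp
  next
    case False
    have "card S' \<noteq> 0" using bS' finS' by auto
    then have "1 < card S'" using False by linarith
    then show ?thesis using e False bS' sub by simp
  qed
qed

lemma elim_step_final:
  fixes f v :: "nat \<Rightarrow> real" and a :: real
  assumes fin: "finite S" and bS: "b \<in> S" and card: "1 < card S"
    and close: "\<forall>k\<in>S. \<bar>f k - v k\<bar> < a"
    and best: "\<forall>k\<in>S. k \<noteq> b \<longrightarrow> v k < v b"
    and gap: "\<forall>k\<in>S. k \<noteq> b \<longrightarrow> 4 * a \<le> v b - v k"
  shows "elim_step S f a = ({}, Some b)"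
proof -
  define S' where "S' = {k \<in> S. \<not> (Max (f ` S) - f k \<ge> 2 * a)}"
  have bS': "b \<in> S'" using best_kept[OF fin bS close best] bS by (simp add: S'_def)
  have "f b \<le> Max (f ` S)" using fin bS by simp
  have "k \<notin> S'" if "k \<noteq> b" for k
  proof
    assume k: "k \<in> S'"
    then have "k \<in> S" by (simp add: S'_def)
    then have "\<bar>f k - v k\<bar> < a" "\<bar>f b - v b\<bar> < a" "4 * a \<le> v b - v k"
      using close bS gap that by auto
    then have "2 * a \<le> Max (f ` S) - f k" using \<open>f b \<le> Max (f ` S)\<close> by linarith
    then show False using k by (simp add: S'_def)
  qed
  then have "S' = {b}" using bS' by auto
  then show ?thesis using card by (simp add: elim_step_def S'_def[symmetric] Let_def)
qed

lemma process:
  fixes S :: "nat \<Rightarrow> nat set" and Ou :: "nat \<Rightarrow> nat option"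
    and f :: "nat \<Rightarrow> nat \<Rightarrow> real" and a :: "nat \<Rightarrow> real" and v :: "nat \<Rightarrow> real"
  assumes S0: "S 0 = {..<K}" "Ou 0 = None" and K: "1 < K" and b: "b < K"
    and stepS: "\<And>n. S (Suc n) = (if act (Suc n) then fst (elim_step (S n) (f (Suc n)) (a (Suc n))) else S n)"
    and stepO: "\<And>n. Ou (Suc n) = (if act (Suc n) then (case snd (elim_step (S n) (f (Suc n)) (a (Suc n))) of None \<Rightarrow> Ou n | Some k \<Rightarrow> Some k) else Ou n)"
    and best: "\<And>j. j < K \<Longrightarrow> j \<noteq> b \<Longrightarrow> v j < v b"
    and good: "\<And>n k. k < K \<Longrightarrow> \<bar>f (Suc n) k - v k\<bar> < a (Suc n)"
    and ev: "act (Suc N)" "\<And>j. j < K \<Longrightarrow> j \<noteq> b \<Longrightarrow> 4 * a (Suc N) \<le> v b - v j"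
  shows "\<forall>n \<ge> Suc N. S n = {} \<and> Ou n = Some b"
proof -
  define inv where "inv n \<longleftrightarrow> (b \<in> S n \<and> S n \<subseteq> {..<K} \<and> 1 < card (S n) \<and> Ou n = None) \<or> (S n = {} \<and> Ou n = Some b)" for n
  have done_step: "S (Suc n) = {} \<and> Ou (Suc n) = Some b" if "S n = {} \<and> Ou n = Some b" for n
    using that by (simp add: stepS stepO elim_step_small)
  have I: "inv n" for n
  proof (induction n)
    case 0 then show ?case using S0 K b by (simp add: inv_def)
  next
    case (Suc n)
    show ?case
    proof (cases "act (Suc n)")
      case False then show ?thesis using Suc by (simp add: inv_def stepS stepO)
    next
      case True
      show ?thesis
      proof (cases "S n = {} \<and> Ou n = Some b")
        case True then show ?thesis using done_step by (simp add: inv_def)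
      next
        case False
        then have h: "b \<in> S n" "S n \<subseteq> {..<K}" "1 < card (S n)" "Ou n = None" using Suc by (auto simp: inv_def)
        have fin: "finite (S n)" using h(2) finite_subset by blast
        have "\<forall>k\<in>S n. \<bar>f (Suc n) k - v k\<bar> < a (Suc n)" using h(2) good by auto
        moreover have "\<forall>k\<in>S n. k \<noteq> b \<longrightarrow> v k < v b" using h(2) best by auto
        ultimately have "(fst (elim_step (S n) (f (Suc n)) (a (Suc n))) = {} \<and> snd (elim_step (S n) (f (Suc n)) (a (Suc n))) = Some b) \<or>
         (snd (elim_step (S n) (f (Suc n)) (a (Suc n))) = None \<and> b \<in> fst (elim_step (S n) (f (Suc n)) (a (Suc n))) \<and>
          fst (elim_step (S n) (f (Suc n)) (a (Suc n))) \<subseteq> S n \<and> 1 < card (fst (elim_step (S n) (f (Suc n)) (a (Suc n)))))"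
          using elim_step_good[OF fin h(1) h(3)] by blast
        then show ?thesis using True h by (auto simp: inv_def stepS stepO)
      qed
    qed
  qed
  have D: "S (Suc N) = {} \<and> Ou (Suc N) = Some b"
  proof (cases "S N = {} \<and> Ou N = Some b")
    case True then show ?thesis using done_step by blast
  next
    case False
    then have h: "b \<in> S N" "S N \<subseteq> {..<K}" "1 < card (S N)" "Ou N = None" using I[of N] by (auto simp: inv_def)
    have fin: "finite (S N)" using h(2) finite_subset by blast
    have "elim_step (S N) (f (Suc N)) (a (Suc N)) = ({}, Some b)"
      by (rule elim_step_final[OF fin h(1) h(3)]) (use h(2) good best ev in auto)
    then show ?thesis using ev h by (simp add: stepS stepO)
  qed
  show ?thesis
  proof (intro allI impI)
    fix n assume "Suc N \<le> n"
    then show "S n = {} \<and> Ou n = Some b"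
    proof (induction n rule: dec_induct)
      case base then show ?case using D .
    next
      case (step n) then show ?case using done_step by blast
    qed
  qed
qed


lemma good_correct:
  fixes K M :: nat and \<delta> :: real and mu :: "nat \<Rightarrow> nat \<Rightarrow> real"
    and kl :: "nat \<Rightarrow> nat" and kg :: nat
  assumes "K > 1" and "M > 1" and "0 < \<delta>"
    and A5: "\<forall>m<M. kl m < K \<and> (\<forall>j<K. j \<noteq> kl m \<longrightarrow> mu j m < mu (kl m) m)"
    and A6: "kg < K \<and> (\<forall>j<K. j \<noteq> kg \<longrightarrow>
           (\<Sum>m<M. mu j m) / real M < (\<Sum>m<M. mu kg m) / real M)"
    and goodl: "\<And>n k m. k < K \<Longrightarrow> m < M \<Longrightarrow> \<bar>emp_mean \<omega> k m (Suc n) - mu k m\<bar> < alpha_l K M \<delta> (Suc n)"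
    and goodg: "\<And>n k. k < K \<Longrightarrow> \<bar>glob_emp_mean M \<omega> k (Suc n) - (\<Sum>m<M. mu k m) / real M\<bar> < alpha_g K M \<delta> (Suc n)"
  shows "fedelim_correct K M \<delta> kl kg \<omega>"
proof -
  let ?s = "fe_state_after fedelim_comm K M \<delta> \<omega>"
  have loc: "\<exists>N. \<forall>n\<ge>N. loc_set (?s n) m = {} \<and> loc_out (?s n) m = Some (kl m)" if m: "m < M" for m
  proof -
    have b: "kl m < K" and best: "\<And>j. j < K \<Longrightarrow> j \<noteq> kl m \<Longrightarrow> mu j m < mu (kl m) m" using A5 m by auto
    have "alpha_l K M \<delta> \<longlonglongrightarrow> 0" using alpha_l_lim assms by simp
    from ev_small[OF this, of "{j. j < K \<and> j \<noteq> kl m}" "\<lambda>j. mu (kl m) m - mu j m"]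
    obtain N0 where N0: "\<forall>n\<ge>N0. \<forall>j\<in>{j. j < K \<and> j \<noteq> kl m}. 4 * alpha_l K M \<delta> n \<le> mu (kl m) m - mu j m"
      using best by auto
    have "\<forall>n \<ge> Suc N0. loc_set (?s n) m = {} \<and> loc_out (?s n) m = Some (kl m)"
    proof (rule process[where S="\<lambda>n. loc_set (?s n) m" and Ou="\<lambda>n. loc_out (?s n) m" and act="\<lambda>_. True"
          and f="\<lambda>n k. emp_mean \<omega> k m n" and a="alpha_l K M \<delta>" and v="\<lambda>j. mu j m" and K=K])
      show "loc_set (?s 0) m = {..<K}" "loc_out (?s 0) m = None" by (simp_all add: fe_init_def)
    qed (use assms b best goodl m N0 in \<open>auto simp: loc_set_Suc loc_out_Suc simp del: fe_state_after.simps\<close>)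
    then show ?thesis by blast
  qed
  have glob: "\<exists>N. \<forall>n\<ge>N. glob_set (?s n) = {} \<and> glob_out (?s n) = Some kg"
  proof -
    let ?v = "\<lambda>j. (\<Sum>m<M. mu j m) / real M"
    have b: "kg < K" and best: "\<And>j. j < K \<Longrightarrow> j \<noteq> kg \<Longrightarrow> ?v j < ?v kg" using A6 by auto
    have "alpha_g K M \<delta> \<longlonglongrightarrow> 0" using alpha_g_lim assms by simp
    from ev_small[OF this, of "{j. j < K \<and> j \<noteq> kg}" "\<lambda>j. ?v kg - ?v j"]
    obtain N0 where N0: "\<forall>n\<ge>N0. \<forall>j\<in>{j. j < K \<and> j \<noteq> kg}. 4 * alpha_g K M \<delta> n \<le> ?v kg - ?v j"
      using best by auto
    define N :: nat where "N = 2 ^ N0 - 1"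
    have SN: "Suc N = 2 ^ N0" unfolding N_def by simp
    have "N0 \<le> Suc N" unfolding SN using less_exp[of N0] by simp
    have "\<forall>n \<ge> Suc N. glob_set (?s n) = {} \<and> glob_out (?s n) = Some kg"
    proof (rule process[where S="\<lambda>n. glob_set (?s n)" and Ou="\<lambda>n. glob_out (?s n)" and act="fedelim_comm"
          and f="\<lambda>n k. glob_emp_mean M \<omega> k n" and a="alpha_g K M \<delta>" and v="?v" and K=K])
      show "glob_set (?s 0) = {..<K}" "glob_out (?s 0) = None" by (simp_all add: fe_init_def)
      show "fedelim_comm (Suc N)" unfolding SN fedelim_comm_def by blast
    qed (use assms b best goodg N0 \<open>N0 \<le> Suc N\<close> in \<open>auto simp: glob_set_Suc glob_out_Suc simp del: fe_state_after.simps\<close>)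
    then show ?thesis by blast
  qed
  from loc obtain Nf where Nf: "\<And>m. m < M \<Longrightarrow> \<forall>n\<ge>Nf m. loc_set (?s n) m = {} \<and> loc_out (?s n) m = Some (kl m)"
    by metis
  from glob obtain Ng where Ng: "\<forall>n\<ge>Ng. glob_set (?s n) = {} \<and> glob_out (?s n) = Some kg" by blast
  define n where "n = Ng + (\<Sum>m<M. Nf m)"
  have "Nf m \<le> n" if "m < M" for m
  proof -
    have "Nf m \<le> (\<Sum>m<M. Nf m)" using that by (intro member_le_sum) auto
    then show ?thesis unfolding n_def by simp
  qed
  then show ?thesis unfolding fedelim_correct_def Let_def
    using Nf Ng by (intro exI[of _ n]) (auto simp: n_def)
qed

lemma emp_mean_meas:
  "k < K \<Longrightarrow> m < M \<Longrightarrow> (\<lambda>\<omega>. emp_mean \<omega> k m n) \<in> borel_measurable (reward_space K M mu)"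
proof -
  assume km: "k < K" "m < M"
  have c: "(\<lambda>\<omega>. \<omega> (k, m, i)) \<in> borel_measurable (reward_space K M mu)" for i
  proof -
    have "(\<lambda>\<omega>. \<omega> (k, m, i)) \<in> measurable (reward_space K M mu) ((\<lambda>(k, m, i). density lborel (normal_density (mu k m) 1)) (k, m, i))"
      unfolding reward_space_def by (rule measurable_component_singleton) (use km in auto)
    then show ?thesis by (simp cong: measurable_cong_sets)
  qed
  show ?thesis unfolding emp_mean_def
    by (intro borel_measurable_divide borel_measurable_sum c borel_measurable_const)
qed

lemma glob_emp_mean_meas:
  "k < K \<Longrightarrow> (\<lambda>\<omega>. glob_emp_mean M \<omega> k n) \<in> borel_measurable (reward_space K M mu)"
  unfolding glob_emp_mean_def
  by (intro borel_measurable_divide borel_measurable_sum emp_mean_meas borel_measurable_const) auto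

definition elim_step' :: "nat set \<Rightarrow> nat set \<Rightarrow> nat set \<times> nat option" where
  "elim_step' S T =
     (if card S > 1 then
        (let S' = S - T in
         if card S' = 1 then ({}, Some (the_elem S')) else (S', None))
      else (S, None))"

lemma elim_step_eq: "elim_step S f a = elim_step' S {k \<in> S. 2 * a \<le> Max (f ` S) - f k}"
proof -
  have "{k \<in> S. \<not> 2 * a \<le> Max (f ` S) - f k} = S - {k \<in> S. 2 * a \<le> Max (f ` S) - f k}" by auto
  then show ?thesis by (simp add: elim_step_def elim_step'_def)
qed

lemma elim_meas:
  fixes F :: "nat \<Rightarrow> 'a \<Rightarrow> real"
  assumes fin: "finite S" and F: "\<And>k. k \<in> S \<Longrightarrow> F k \<in> borel_measurable P"
  shows "(\<lambda>\<omega>. elim_step S (\<lambda>k. F k \<omega>) a) \<in> measurable P (count_space (Pow S \<times> UNIV))"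
proof -
  define D where "D \<omega> = {k \<in> S. 2 * a \<le> Max ((\<lambda>k. F k \<omega>) ` S) - F k \<omega>}" for \<omega>
  have D: "D \<in> measurable P (count_space (Pow S))"
  proof (subst measurable_count_space_eq2)
    show "finite (Pow S)" using fin by simp
    show "D \<in> space P \<rightarrow> Pow S \<and> (\<forall>T\<in>Pow S. D -` {T} \<inter> space P \<in> sets P)"
    proof (intro conjI ballI)
      show "D \<in> space P \<rightarrow> Pow S" by (auto simp: D_def)
    next
      fix T assume T: "T \<in> Pow S"
      have eqD: "D \<omega> = T \<longleftrightarrow> (\<forall>k\<in>S. (k \<in> T) = (2 * a \<le> Max ((\<lambda>k. F k \<omega>) ` S) - F k \<omega>))" for \<omega>
        using T unfolding D_def set_eq_iff by blast
      have "D -` {T} \<inter> space P = {\<omega> \<in> space P. \<forall>k\<in>S. (k \<in> T) = (2 * a \<le> Max ((\<lambda>k. F k \<omega>) ` S) - F k \<omega>)}"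
        using eqD by blast
      also have "\<dots> \<in> sets P"
        unfolding Measurable.pred_def[symmetric]
      proof (rule pred_intros_finite(3)[OF fin])
        fix k assume k: "k \<in> S"
        have gk[measurable]: "(\<lambda>\<omega>. Max ((\<lambda>k. F k \<omega>) ` S) - F k \<omega>) \<in> borel_measurable P"
          using fin F k by (intro borel_measurable_diff borel_measurable_Max) auto
        have "Measurable.pred P (\<lambda>\<omega>. 2 * a \<le> Max ((\<lambda>k. F k \<omega>) ` S) - F k \<omega>)"
          unfolding Measurable.pred_def by (rule borel_measurable_le[OF borel_measurable_const gk])
        then show "Measurable.pred P (\<lambda>\<omega>. (k \<in> T) = (2 * a \<le> Max ((\<lambda>k. F k \<omega>) ` S) - F k \<omega>))"
          by (cases "k \<in> T") (auto simp: Measurable.pred_def)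
      qed
      finally show "D -` {T} \<inter> space P \<in> sets P" .
    qed
  qed
  have H: "elim_step' S \<in> measurable (count_space (Pow S)) (count_space (Pow S \<times> UNIV))"
    by (auto simp: elim_step'_def Let_def)
  have "(\<lambda>\<omega>. elim_step' S (D \<omega>)) \<in> measurable P (count_space (Pow S \<times> UNIV))"
    using measurable_compose[OF D H] .
  then show ?thesis by (simp add: elim_step_eq D_def)
qed


lemma countable_A: "countable (Pow {..<(K::nat)} \<times> (UNIV :: nat option set))"
  by (intro countable_SIGMA countable_finite countableI_type) auto

lemma loc_state_meas:
  assumes m: "m < M"
  shows "(\<lambda>\<omega>. (loc_set (fe_state_after c K M \<delta> \<omega> n) m, loc_out (fe_state_after c K M \<delta> \<omega> n) m))
           \<in> measurable (reward_space K M mu) (count_space (Pow {..<K} \<times> UNIV))"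
proof (induction n)
  case 0 show ?case by (auto simp: fe_init_def intro!: measurable_const)
next
  case (Suc n)
  define \<Phi> where "\<Phi> = (\<lambda>i \<omega>. (fst (elim_step (fst i) (\<lambda>k. emp_mean \<omega> k m (Suc n)) (alpha_l K M \<delta> (Suc n))),
      case snd (elim_step (fst i) (\<lambda>k. emp_mean \<omega> k m (Suc n)) (alpha_l K M \<delta> (Suc n))) of None \<Rightarrow> snd i | Some k \<Rightarrow> Some k))"
  have eq: "(\<lambda>\<omega>. (loc_set (fe_state_after c K M \<delta> \<omega> (Suc n)) m, loc_out (fe_state_after c K M \<delta> \<omega> (Suc n)) m))
     = (\<lambda>\<omega>. \<Phi> (loc_set (fe_state_after c K M \<delta> \<omega> n) m, loc_out (fe_state_after c K M \<delta> \<omega> n) m) \<omega>)"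
    by (rule ext) (simp add: \<Phi>_def loc_set_Suc loc_out_Suc split: option.split del: fe_state_after.simps)
  have "(\<lambda>\<omega>. \<Phi> (loc_set (fe_state_after c K M \<delta> \<omega> n) m, loc_out (fe_state_after c K M \<delta> \<omega> n) m) \<omega>)
     \<in> measurable (reward_space K M mu) (count_space (Pow {..<K} \<times> UNIV))"
  proof (rule measurable_compose_countable'[OF _ Suc.IH countable_A])
    fix i assume "i \<in> Pow {..<K} \<times> (UNIV :: nat option set)"
    then obtain S r0 where i: "i = (S, r0)" and S: "S \<subseteq> {..<K}" by auto
    have fin: "finite S" using S finite_subset by blast
    have E: "(\<lambda>\<omega>. elim_step S (\<lambda>k. emp_mean \<omega> k m (Suc n)) (alpha_l K M \<delta> (Suc n)))
        \<in> measurable (reward_space K M mu) (count_space (Pow S \<times> UNIV))"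
      by (rule elim_meas[OF fin]) (use S m emp_mean_meas in auto)
    have G: "(\<lambda>(T, r). (T, case r of None \<Rightarrow> r0 | Some k \<Rightarrow> Some k)) \<in> measurable (count_space (Pow S \<times> (UNIV :: nat option set))) (count_space (Pow {..<K} \<times> UNIV))"
      using S by auto
    have "\<Phi> i = (\<lambda>\<omega>. (\<lambda>(T, r). (T, case r of None \<Rightarrow> r0 | Some k \<Rightarrow> Some k)) (elim_step S (\<lambda>k. emp_mean \<omega> k m (Suc n)) (alpha_l K M \<delta> (Suc n))))"
      by (rule ext) (simp add: \<Phi>_def i case_prod_beta split: option.split)
    then show "(\<lambda>\<omega>. \<Phi> i \<omega>) \<in> measurable (reward_space K M mu) (count_space (Pow {..<K} \<times> UNIV))"
      using measurable_compose[OF E G] by simp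
  qed
  then show ?case unfolding eq .
qed

lemma glob_state_meas:
  shows "(\<lambda>\<omega>. (glob_set (fe_state_after c K M \<delta> \<omega> n), glob_out (fe_state_after c K M \<delta> \<omega> n)))
           \<in> measurable (reward_space K M mu) (count_space (Pow {..<K} \<times> UNIV))"
proof (induction n)
  case 0 show ?case by (auto simp: fe_init_def intro!: measurable_const)
next
  case (Suc n)
  define \<Phi> where "\<Phi> = (\<lambda>i \<omega>. if c (Suc n) then (fst (elim_step (fst i) (\<lambda>k. glob_emp_mean M \<omega> k (Suc n)) (alpha_g K M \<delta> (Suc n))),
      case snd (elim_step (fst i) (\<lambda>k. glob_emp_mean M \<omega> k (Suc n)) (alpha_g K M \<delta> (Suc n))) of None \<Rightarrow> snd i | Some k \<Rightarrow> Some k) else i)"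
  have eq: "(\<lambda>\<omega>. (glob_set (fe_state_after c K M \<delta> \<omega> (Suc n)), glob_out (fe_state_after c K M \<delta> \<omega> (Suc n))))
     = (\<lambda>\<omega>. \<Phi> (glob_set (fe_state_after c K M \<delta> \<omega> n), glob_out (fe_state_after c K M \<delta> \<omega> n)) \<omega>)"
    by (rule ext) (simp add: \<Phi>_def glob_set_Suc glob_out_Suc split: option.split del: fe_state_after.simps)
  have "(\<lambda>\<omega>. \<Phi> (glob_set (fe_state_after c K M \<delta> \<omega> n), glob_out (fe_state_after c K M \<delta> \<omega> n)) \<omega>)
     \<in> measurable (reward_space K M mu) (count_space (Pow {..<K} \<times> UNIV))"
  proof (rule measurable_compose_countable'[OF _ Suc.IH countable_A])
    fix i assume "i \<in> Pow {..<K} \<times> (UNIV :: nat option set)"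
    then obtain S r0 where i: "i = (S, r0)" and S: "S \<subseteq> {..<K}" by auto
    have fin: "finite S" using S finite_subset by blast
    show "(\<lambda>\<omega>. \<Phi> i \<omega>) \<in> measurable (reward_space K M mu) (count_space (Pow {..<K} \<times> UNIV))"
    proof (cases "c (Suc n)")
      case True
      have E: "(\<lambda>\<omega>. elim_step S (\<lambda>k. glob_emp_mean M \<omega> k (Suc n)) (alpha_g K M \<delta> (Suc n)))
          \<in> measurable (reward_space K M mu) (count_space (Pow S \<times> UNIV))"
        by (rule elim_meas[OF fin]) (use S glob_emp_mean_meas in auto)
      have G: "(\<lambda>(T, r). (T, case r of None \<Rightarrow> r0 | Some k \<Rightarrow> Some k)) \<in> measurable (count_space (Pow S \<times> (UNIV :: nat option set))) (count_space (Pow {..<K} \<times> UNIV))"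
        using S by auto
      have "\<Phi> i = (\<lambda>\<omega>. (\<lambda>(T, r). (T, case r of None \<Rightarrow> r0 | Some k \<Rightarrow> Some k)) (elim_step S (\<lambda>k. glob_emp_mean M \<omega> k (Suc n)) (alpha_g K M \<delta> (Suc n))))"
        by (rule ext) (simp add: \<Phi>_def i True case_prod_beta split: option.split)
      then show ?thesis
        using measurable_compose[OF E G] by simp
    next
      case False
      then show ?thesis using S by (simp add: \<Phi>_def i)
    qed
  qed
  then show ?case unfolding eq .
qed

lemma correct_meas:
  "{\<omega> \<in> space (reward_space K M mu). fedelim_correct K M \<delta> kl kg \<omega>} \<in> sets (reward_space K M mu)"
proof -
  have eq: "fedelim_correct K M \<delta> kl kg \<omega> \<longleftrightarrow> (\<exists>n. (\<forall>m\<in>{..<M}. (loc_set (fe_state_after fedelim_comm K M \<delta> \<omega> n) m, loc_out (fe_state_after fedelim_comm K M \<delta> \<omega> n) m) = ({}, Some (kl m)))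
     \<and> (glob_set (fe_state_after fedelim_comm K M \<delta> \<omega> n), glob_out (fe_state_after fedelim_comm K M \<delta> \<omega> n)) = ({}, Some kg))" for \<omega>
    unfolding fedelim_correct_def Let_def by (simp add: Ball_def all_conj_distrib imp_conjR conj_ac)
  have "Measurable.pred (reward_space K M mu) (\<lambda>\<omega>. fedelim_correct K M \<delta> kl kg \<omega>)"
    unfolding eq
  proof (intro pred_intros_countable(2) pred_intros_logic(3) pred_intros_finite(3))
    fix n m assume m: "m \<in> {..<M}"
    show "Measurable.pred (reward_space K M mu) (\<lambda>\<omega>. (loc_set (fe_state_after fedelim_comm K M \<delta> \<omega> n) m, loc_out (fe_state_after fedelim_comm K M \<delta> \<omega> n) m) = ({}, Some (kl m)))"
      by (rule pred_eq_const1[OF loc_state_meas]) (use m in auto)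
  next
    fix n
    show "Measurable.pred (reward_space K M mu) (\<lambda>\<omega>. (glob_set (fe_state_after fedelim_comm K M \<delta> \<omega> n), glob_out (fe_state_after fedelim_comm K M \<delta> \<omega> n)) = ({}, Some kg))"
      by (rule pred_eq_const1[OF glob_state_meas]) auto
  qed auto
  then show ?thesis by (simp add: Measurable.pred_def)
qed


lemma normal_shift:
  assumes "\<sigma> > 0"
  shows "exp (d * (x - \<mu>)) * normal_density \<mu> \<sigma> x = exp (d\<^sup>2 * \<sigma>\<^sup>2 / 2) * normal_density (\<mu> + d * \<sigma>\<^sup>2) \<sigma> x"
proof -
  have "d * (x - \<mu>) + (-(x - \<mu>)\<^sup>2 / (2 * \<sigma>\<^sup>2)) = d\<^sup>2 * \<sigma>\<^sup>2 / 2 + (-(x - (\<mu> + d * \<sigma>\<^sup>2))\<^sup>2 / (2 * \<sigma>\<^sup>2))"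
  proof -
    define y where "y = x - \<mu>"
    have e: "x - (\<mu> + d * \<sigma>\<^sup>2) = y - d * \<sigma>\<^sup>2" by (simp add: y_def)
    have s2: "\<sigma>\<^sup>2 > 0" using assms by simp
    have "d * y + (-y\<^sup>2 / (2 * \<sigma>\<^sup>2)) = d\<^sup>2 * \<sigma>\<^sup>2 / 2 + (-(y - d * \<sigma>\<^sup>2)\<^sup>2 / (2 * \<sigma>\<^sup>2))"
      using s2 by (simp add: field_simps power2_diff)
    then show ?thesis by (simp add: e y_def)
  qed
  then have "exp (d * (x - \<mu>)) * exp (-(x - \<mu>)\<^sup>2 / (2 * \<sigma>\<^sup>2)) = exp (d\<^sup>2 * \<sigma>\<^sup>2 / 2) * exp (-(x - (\<mu> + d * \<sigma>\<^sup>2))\<^sup>2 / (2 * \<sigma>\<^sup>2))"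
    by (simp add: exp_add[symmetric])
  then show ?thesis unfolding normal_density_def by (simp add: algebra_simps)
qed

lemma nn_integral_normal: "\<sigma> > 0 \<Longrightarrow> (\<integral>\<^sup>+x. ennreal (normal_density \<mu> \<sigma> x) \<partial>lborel) = 1"
  by (subst nn_integral_eq_integral) (auto intro: integrable_normal_density)

lemma normal_mgf:
  assumes "\<sigma> > 0"
  shows "(\<integral>\<^sup>+x. ennreal (exp (d * (x - \<mu>)) * normal_density \<mu> \<sigma> x) \<partial>lborel) = ennreal (exp (d\<^sup>2 * \<sigma>\<^sup>2 / 2))"
proof -
  have "(\<integral>\<^sup>+x. ennreal (exp (d * (x - \<mu>)) * normal_density \<mu> \<sigma> x) \<partial>lborel)
      = (\<integral>\<^sup>+x. ennreal (exp (d\<^sup>2 * \<sigma>\<^sup>2 / 2)) * ennreal (normal_density (\<mu> + d * \<sigma>\<^sup>2) \<sigma> x) \<partial>lborel)"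
    using assms by (simp add: normal_shift ennreal_mult)
  also have "\<dots> = ennreal (exp (d\<^sup>2 * \<sigma>\<^sup>2 / 2)) * (\<integral>\<^sup>+x. ennreal (normal_density (\<mu> + d * \<sigma>\<^sup>2) \<sigma> x) \<partial>lborel)"
    by (rule nn_integral_cmult) simp
  finally show ?thesis using assms by (simp add: nn_integral_normal)
qed

lemma normal_tail:
  assumes s: "\<sigma> > 0" and t: "t > 0"
  shows "(\<integral>\<^sup>+x. ennreal (normal_density \<mu> \<sigma> x) * indicator {x. t \<le> \<bar>x - \<mu>\<bar>} x \<partial>lborel)
         \<le> ennreal (2 * exp (-(t\<^sup>2) / (2 * \<sigma>\<^sup>2)))"
proof -
  define c where "c = t / \<sigma>\<^sup>2"
  have c: "c > 0" using s t by (simp add: c_def)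
  have pt: "ennreal (normal_density \<mu> \<sigma> x) * indicator {x. t \<le> \<bar>x - \<mu>\<bar>} x
      \<le> ennreal (exp (-(c * t)) * (exp (c * (x - \<mu>)) * normal_density \<mu> \<sigma> x))
        + ennreal (exp (-(c * t)) * (exp ((-c) * (x - \<mu>)) * normal_density \<mu> \<sigma> x))" for x
  proof (cases "t \<le> \<bar>x - \<mu>\<bar>")
    case True
    have N: "0 \<le> normal_density \<mu> \<sigma> x" by simp
    have "1 \<le> exp (-(c * t)) * exp (c * (x - \<mu>)) + exp (-(c * t)) * exp ((-c) * (x - \<mu>))"
    proof (cases "x - \<mu> \<ge> 0")
      case True
      then have "c * t \<le> c * (x - \<mu>)" using \<open>t \<le> \<bar>x - \<mu>\<bar>\<close> c by (intro mult_left_mono) auto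
      then have "1 \<le> exp (-(c * t)) * exp (c * (x - \<mu>))" by (simp add: exp_add[symmetric])
      moreover have "0 \<le> exp (-(c * t)) * exp ((-c) * (x - \<mu>))" by simp
      ultimately show ?thesis by linarith
    next
      case False
      have "t \<le> -(x - \<mu>)" using False \<open>t \<le> \<bar>x - \<mu>\<bar>\<close> by simp
      then have "c * t \<le> c * (-(x - \<mu>))" using c by (intro mult_left_mono) auto
      then have "c * t \<le> (-c) * (x - \<mu>)" by (simp add: algebra_simps)
      then have "1 \<le> exp (-(c * t)) * exp ((-c) * (x - \<mu>))" by (simp add: exp_add[symmetric])
      moreover have "0 \<le> exp (-(c * t)) * exp (c * (x - \<mu>))" by simp
      ultimately show ?thesis by linarith
    qed
    then have "normal_density \<mu> \<sigma> x \<le> (exp (-(c * t)) * exp (c * (x - \<mu>)) + exp (-(c * t)) * exp ((-c) * (x - \<mu>))) * normal_density \<mu> \<sigma> x"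
      using N mult_right_mono[of 1 _ "normal_density \<mu> \<sigma> x"] by simp
    then show ?thesis using True by (simp add: ennreal_plus[symmetric] algebra_simps del: ennreal_plus)
  qed simp
  have "(\<integral>\<^sup>+x. ennreal (normal_density \<mu> \<sigma> x) * indicator {x. t \<le> \<bar>x - \<mu>\<bar>} x \<partial>lborel)
     \<le> (\<integral>\<^sup>+x. ennreal (exp (-(c * t)) * (exp (c * (x - \<mu>)) * normal_density \<mu> \<sigma> x))
        + ennreal (exp (-(c * t)) * (exp ((-c) * (x - \<mu>)) * normal_density \<mu> \<sigma> x)) \<partial>lborel)"
    by (rule nn_integral_mono) (rule pt)
  also have "\<dots> = (\<integral>\<^sup>+x. ennreal (exp (-(c * t))) * ennreal (exp (c * (x - \<mu>)) * normal_density \<mu> \<sigma> x) \<partial>lborel)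
        + (\<integral>\<^sup>+x. ennreal (exp (-(c * t))) * ennreal (exp ((-c) * (x - \<mu>)) * normal_density \<mu> \<sigma> x) \<partial>lborel)"
    by (subst nn_integral_add[symmetric]) (auto simp: ennreal_mult)
  also have "\<dots> = ennreal (exp (-(c * t))) * ennreal (exp (c\<^sup>2 * \<sigma>\<^sup>2 / 2)) + ennreal (exp (-(c * t))) * ennreal (exp ((-c)\<^sup>2 * \<sigma>\<^sup>2 / 2))"
    using normal_mgf[OF s, of "-c" \<mu>] normal_mgf[OF s, of c \<mu>] by (simp add: nn_integral_cmult)
  also have "\<dots> = ennreal (2 * exp (-(t\<^sup>2) / (2 * \<sigma>\<^sup>2)))"
  proof -
    have "-(c * t) + c\<^sup>2 * \<sigma>\<^sup>2 / 2 = -(t\<^sup>2) / (2 * \<sigma>\<^sup>2)"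
      using s by (simp add: c_def field_simps power2_eq_square)
    then have "exp (-(c * t)) * exp (c\<^sup>2 * \<sigma>\<^sup>2 / 2) = exp (-(t\<^sup>2) / (2 * \<sigma>\<^sup>2))"
      by (simp add: exp_add[symmetric])
    then show ?thesis by (simp add: ennreal_mult[symmetric] ennreal_plus[symmetric] del: ennreal_plus)
  qed
  finally show ?thesis .
qed


lemma sum_tail:
  fixes \<nu> :: "'i \<Rightarrow> real" and I J :: "'i set"
  defines "N \<equiv> (\<lambda>j. density lborel (normal_density (\<nu> j) 1))"
  assumes JI: "J \<subseteq> I" and fin: "finite J" and ne: "J \<noteq> {}" and t: "t > 0"
  shows "measure (PiM I N) {\<omega> \<in> space (PiM I N). t \<le> \<bar>(\<Sum>j\<in>J. \<omega> j) - (\<Sum>j\<in>J. \<nu> j)\<bar>}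
           \<le> 2 * exp (-(t\<^sup>2) / (2 * real (card J)))"
proof -
  have pN: "prob_space (N j)" for j unfolding N_def by (rule prob_space_normal_density) simp
  interpret product_prob_space N I
    by (rule product_prob_spaceI) (rule pN)
  have setsN: "sets (N j) = sets borel" for j by (simp add: N_def)
  have comp: "distr (PiM I N) borel (\<lambda>\<omega>. \<omega> j) = N j" if "j \<in> I" for j
  proof -
    have "distr (PiM I N) borel (\<lambda>\<omega>. \<omega> j) = distr (PiM I N) (N j) (\<lambda>\<omega>. \<omega> j)"
      by (rule distr_cong) (simp_all add: setsN)
    also have "\<dots> = N j" using that by (rule PiM_component)
    finally show ?thesis .
  qed
  have meas: "(\<lambda>\<omega>. \<omega> j) \<in> measurable (PiM I N) borel" if "j \<in> I" for j
  proof -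
    have "(\<lambda>\<omega>. \<omega> j) \<in> measurable (PiM I N) (N j)" using that by (rule measurable_component_singleton)
    then show ?thesis by (simp add: setsN cong: measurable_cong_sets)
  qed
  have dist: "distributed (PiM I N) lborel (\<lambda>\<omega>. \<omega> j) (\<lambda>x. ennreal (normal_density (\<nu> j) 1 x))" if "j \<in> I" for j
  proof -
    have "distr (PiM I N) lborel (\<lambda>\<omega>. \<omega> j) = distr (PiM I N) borel (\<lambda>\<omega>. \<omega> j)"
      by (rule distr_cong) simp_all
    then show ?thesis using comp[OF that] meas[OF that]
      by (simp add: distributed_def N_def cong: measurable_cong_sets)
  qed
  have indep: "indep_vars (\<lambda>_. borel) (\<lambda>j \<omega>. \<omega> j) J"
  proof (subst indep_vars_iff_distr_eq_PiM'[OF ne])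
    show "random_variable borel (\<lambda>\<omega>. \<omega> j)" if "j \<in> J" for j using meas that JI by auto
    have "distr (PiM I N) (PiM J (\<lambda>_. borel)) (\<lambda>x. \<lambda>i\<in>J. x i) = distr (PiM I N) (PiM J N) (\<lambda>x. restrict x J)"
      by (rule distr_cong) (auto intro!: sets_PiM_cong simp: setsN)
    also have "\<dots> = PiM J N" using fin JI by (rule distr_PiM_restrict_finite)
    also have "\<dots> = PiM J (\<lambda>j. distr (PiM I N) borel (\<lambda>\<omega>. \<omega> j))"
      using JI by (intro PiM_cong) (auto simp: comp)
    finally show "distr (PiM I N) (PiM J (\<lambda>_. borel)) (\<lambda>x. \<lambda>i\<in>J. x i) = PiM J (\<lambda>j. distr (PiM I N) borel (\<lambda>\<omega>. \<omega> j))" .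
  qed
  have D: "distributed (PiM I N) lborel (\<lambda>\<omega>. \<Sum>j\<in>J. \<omega> j) (normal_density (\<Sum>j\<in>J. \<nu> j) (sqrt (\<Sum>j\<in>J. 1\<^sup>2)))"
    by (rule sum_indep_normal[OF fin ne indep]) (use dist JI in auto)
  define \<sigma> where "\<sigma> = sqrt (real (card J))"
  have \<sigma>: "\<sigma> > 0" "\<sigma>\<^sup>2 = real (card J)" using fin ne by (auto simp: \<sigma>_def card_gt_0_iff)
  have D': "distributed (PiM I N) lborel (\<lambda>\<omega>. \<Sum>j\<in>J. \<omega> j) (normal_density (\<Sum>j\<in>J. \<nu> j) \<sigma>)"
    using D by (simp add: \<sigma>_def)
  let ?A = "{x. t \<le> \<bar>x - (\<Sum>j\<in>J. \<nu> j)\<bar>}"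
  have A: "?A \<in> sets lborel" by measurable
  have "emeasure (PiM I N) {\<omega> \<in> space (PiM I N). t \<le> \<bar>(\<Sum>j\<in>J. \<omega> j) - (\<Sum>j\<in>J. \<nu> j)\<bar>}
      = emeasure (PiM I N) ((\<lambda>\<omega>. \<Sum>j\<in>J. \<omega> j) -` ?A \<inter> space (PiM I N))"
    by (intro arg_cong2[where f=emeasure]) auto
  also have "\<dots> = (\<integral>\<^sup>+x. ennreal (normal_density (\<Sum>j\<in>J. \<nu> j) \<sigma> x) * indicator ?A x \<partial>lborel)"
    by (rule distributed_emeasure[OF D' A])
  also have "\<dots> \<le> ennreal (2 * exp (-(t\<^sup>2) / (2 * \<sigma>\<^sup>2)))"
    by (rule normal_tail[OF \<sigma>(1) t])
  finally have "ennreal (measure (PiM I N) {\<omega> \<in> space (PiM I N). t \<le> \<bar>(\<Sum>j\<in>J. \<omega> j) - (\<Sum>j\<in>J. \<nu> j)\<bar>})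
      \<le> ennreal (2 * exp (-(t\<^sup>2) / (2 * \<sigma>\<^sup>2)))"
    by (simp add: P.emeasure_eq_measure)
  then show ?thesis using \<sigma>(2) by (simp add: ennreal_le_iff)
qed


lemma rs_eq: "reward_space K M mu = PiM ({..<K} \<times> {..<M} \<times> UNIV) (\<lambda>j. density lborel (normal_density ((\<lambda>(k, m, i). mu k m) j) 1))"
  unfolding reward_space_def by (intro PiM_cong) (auto split: prod.split)

lemma exp_calc:
  fixes d X a :: real
  assumes d: "d > 0" and X: "X > 1" and a: "a = sqrt (2 * ln X / d)"
  shows "2 * exp (-((d * a)\<^sup>2) / (2 * d)) = 2 / X" and "a > 0"
proof -
  have l: "ln X > 0" using X by simp
  have a2: "a\<^sup>2 = 2 * ln X / d" using a l d by simp
  have "(d * a)\<^sup>2 = d * d * a\<^sup>2" by (simp add: power2_eq_square)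
  also have "\<dots> = 2 * d * ln X" using a2 d by simp
  finally have "(d * a)\<^sup>2 / (2 * d) = ln X" using d by simp
  then have "exp (-((d * a)\<^sup>2) / (2 * d)) = exp (- ln X)" by simp
  also have "\<dots> = 1 / X" using X by (simp add: exp_minus inverse_eq_divide)
  finally show "2 * exp (-((d * a)\<^sup>2) / (2 * d)) = 2 / X" by simp
  show "a > 0" using a l d by simp
qed

lemma tail_l:
  assumes k: "k < K" and m: "m < M" and n: "n > 0" and \<delta>: "\<delta> > 0" "\<delta> < 1"
  shows "measure (reward_space K M mu) {\<omega> \<in> space (reward_space K M mu). alpha_l K M \<delta> n \<le> \<bar>emp_mean \<omega> k m n - mu k m\<bar>}
         \<le> \<delta> / (4 * real K * real M * (real n)\<^sup>2)"
proof -
  define \<nu> where "\<nu> = (\<lambda>(k::nat, m::nat, i::nat). mu k m)"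
  define J where "J = (\<lambda>i. (k, m, i)) ` {..<n}"
  define a where "a = alpha_l K M \<delta> n"
  define X where "X = 8 * real K * real M * (real n)\<^sup>2 / \<delta>"
  have KM: "real K \<ge> 1" "real M \<ge> 1" using k m by auto
  have n1: "real n \<ge> 1" using n by simp
  have n2: "1 \<le> (real n)\<^sup>2" using n1 by (simp add: one_le_power)
  have "1 * 1 \<le> real K * real M" using KM by (intro mult_mono) auto
  then have "1 * 1 \<le> real K * real M * (real n)\<^sup>2" using n2 by (intro mult_mono) auto
  then have "1 \<le> real K * real M * (real n)\<^sup>2" by simp
  then have X1: "X > 1" using \<delta> by (simp add: X_def field_simps)
  have aX: "a = sqrt (2 * ln X / real n)" by (simp add: a_def X_def alpha_l_def)
  note ec = exp_calc[of "real n" X a, OF _ X1 aX]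
  have apos: "a > 0" using ec(2) n by simp
  have inj: "inj_on (\<lambda>i. (k, m, i)) {..<n}" by (auto simp: inj_on_def)
  have cardJ: "card J = n" unfolding J_def using card_image[OF inj] by simp
  have JI: "J \<subseteq> {..<K} \<times> {..<M} \<times> UNIV" using k m by (auto simp: J_def)
  have sumJ: "(\<Sum>j\<in>J. f j) = (\<Sum>i<n. f (k, m, i))" for f :: "nat \<times> nat \<times> nat \<Rightarrow> real"
    unfolding J_def by (simp add: sum.reindex[OF inj])
  have set_eq: "{\<omega> \<in> space (reward_space K M mu). a \<le> \<bar>emp_mean \<omega> k m n - mu k m\<bar>}
      = {\<omega> \<in> space (reward_space K M mu). real n * a \<le> \<bar>(\<Sum>j\<in>J. \<omega> j) - (\<Sum>j\<in>J. \<nu> j)\<bar>}"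
  proof -
    have "a \<le> \<bar>emp_mean \<omega> k m n - mu k m\<bar> \<longleftrightarrow> real n * a \<le> \<bar>(\<Sum>j\<in>J. \<omega> j) - (\<Sum>j\<in>J. \<nu> j)\<bar>" for \<omega>
    proof -
      have "emp_mean \<omega> k m n - mu k m = ((\<Sum>j\<in>J. \<omega> j) - (\<Sum>j\<in>J. \<nu> j)) / real n"
        using n by (simp add: emp_mean_def sumJ \<nu>_def field_simps)
      then have "\<bar>(\<Sum>j\<in>J. \<omega> j) - (\<Sum>j\<in>J. \<nu> j)\<bar> = real n * \<bar>emp_mean \<omega> k m n - mu k m\<bar>" using n by simp
      moreover have "real n * a \<le> real n * \<bar>emp_mean \<omega> k m n - mu k m\<bar> \<longleftrightarrow> a \<le> \<bar>emp_mean \<omega> k m n - mu k m\<bar>"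
        using n by (intro mult_le_cancel_left_pos) simp
      ultimately show ?thesis by simp
    qed
    then show ?thesis by blast
  qed
  have "J \<noteq> {}" using n by (simp add: J_def lessThan_empty_iff)
  have "measure (reward_space K M mu) {\<omega> \<in> space (reward_space K M mu). real n * a \<le> \<bar>(\<Sum>j\<in>J. \<omega> j) - (\<Sum>j\<in>J. \<nu> j)\<bar>}
      \<le> 2 * exp (-((real n * a)\<^sup>2) / (2 * real (card J)))"
    unfolding rs_eq \<nu>_def
    by (rule sum_tail[OF JI _ \<open>J \<noteq> {}\<close>]) (use apos n in \<open>auto simp: J_def\<close>)
  then have "measure (reward_space K M mu) {\<omega> \<in> space (reward_space K M mu). a \<le> \<bar>emp_mean \<omega> k m n - mu k m\<bar>}
      \<le> 2 * exp (-((real n * a)\<^sup>2) / (2 * real (card J)))"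
    by (simp only: set_eq)
  also have "\<dots> = 2 / X" using ec(1) n cardJ by simp
  also have "\<dots> = \<delta> / (4 * real K * real M * (real n)\<^sup>2)" using \<delta> by (simp add: X_def field_simps)
  finally show ?thesis by (simp add: a_def)
qed

lemma tail_g:
  assumes k: "k < K" and M: "M > 0" and n: "n > 0" and \<delta>: "\<delta> > 0" "\<delta> < 1"
  shows "measure (reward_space K M mu) {\<omega> \<in> space (reward_space K M mu). alpha_g K M \<delta> n \<le> \<bar>glob_emp_mean M \<omega> k n - (\<Sum>m<M. mu k m) / real M\<bar>}
         \<le> \<delta> / (4 * real K * (real n)\<^sup>2)"
proof -
  define \<nu> where "\<nu> = (\<lambda>(k::nat, m::nat, i::nat). mu k m)"
  define J where "J = (\<lambda>(m, i). (k, m, i)) ` ({..<M} \<times> {..<n})"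
  define a where "a = alpha_g K M \<delta> n"
  define X where "X = 8 * real K * (real n)\<^sup>2 / \<delta>"
  have KM: "real K \<ge> 1" "real M \<ge> 1" using k M by auto
  have n1: "real n \<ge> 1" using n by simp
  have n2: "1 \<le> (real n)\<^sup>2" using n1 by (simp add: one_le_power)
  have "1 * 1 \<le> real K * (real n)\<^sup>2" using KM n2 by (intro mult_mono) auto
  then have "1 \<le> real K * (real n)\<^sup>2" by simp
  then have X1: "X > 1" using \<delta> by (simp add: X_def field_simps)
  have aX: "a = sqrt (2 * ln X / (real M * real n))" by (simp add: a_def X_def alpha_g_def)
  note ec = exp_calc[of "real M * real n" X a, OF _ X1 aX]
  have apos: "a > 0" using ec(2) n M by simp
  have inj: "inj_on (\<lambda>(m, i). (k, m, i)) ({..<M} \<times> {..<n})" by (auto simp: inj_on_def)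
  have cardJ: "card J = M * n" unfolding J_def using card_image[OF inj] by (simp add: card_cartesian_product)
  have JI: "J \<subseteq> {..<K} \<times> {..<M} \<times> UNIV" using k by (auto simp: J_def)
  have sumJ: "(\<Sum>j\<in>J. f j) = (\<Sum>m<M. \<Sum>i<n. f (k, m, i))" for f :: "nat \<times> nat \<times> nat \<Rightarrow> real"
    unfolding J_def by (subst sum.reindex[OF inj]) (simp add: sum.cartesian_product case_prod_beta)
  have set_eq: "{\<omega> \<in> space (reward_space K M mu). a \<le> \<bar>glob_emp_mean M \<omega> k n - (\<Sum>m<M. mu k m) / real M\<bar>}
      = {\<omega> \<in> space (reward_space K M mu). real M * real n * a \<le> \<bar>(\<Sum>j\<in>J. \<omega> j) - (\<Sum>j\<in>J. \<nu> j)\<bar>}"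
  proof -
    have "a \<le> \<bar>glob_emp_mean M \<omega> k n - (\<Sum>m<M. mu k m) / real M\<bar> \<longleftrightarrow> real M * real n * a \<le> \<bar>(\<Sum>j\<in>J. \<omega> j) - (\<Sum>j\<in>J. \<nu> j)\<bar>" for \<omega>
    proof -
      have "glob_emp_mean M \<omega> k n - (\<Sum>m<M. mu k m) / real M = ((\<Sum>j\<in>J. \<omega> j) - (\<Sum>j\<in>J. \<nu> j)) / (real M * real n)"
        using n M by (simp add: glob_emp_mean_def emp_mean_def sumJ \<nu>_def field_simps sum_divide_distrib[symmetric] sum_distrib_left sum_subtractf)
      then have "\<bar>(\<Sum>j\<in>J. \<omega> j) - (\<Sum>j\<in>J. \<nu> j)\<bar> = (real M * real n) * \<bar>glob_emp_mean M \<omega> k n - (\<Sum>m<M. mu k m) / real M\<bar>" using n M by simp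
      moreover have "(real M * real n) * a \<le> (real M * real n) * \<bar>glob_emp_mean M \<omega> k n - (\<Sum>m<M. mu k m) / real M\<bar> \<longleftrightarrow> a \<le> \<bar>glob_emp_mean M \<omega> k n - (\<Sum>m<M. mu k m) / real M\<bar>"
        using n M by (intro mult_le_cancel_left_pos) simp
      ultimately show ?thesis by simp
    qed
    then show ?thesis by blast
  qed
  have "J \<noteq> {}" using n M by (auto simp: J_def)
  have "measure (reward_space K M mu) {\<omega> \<in> space (reward_space K M mu). real M * real n * a \<le> \<bar>(\<Sum>j\<in>J. \<omega> j) - (\<Sum>j\<in>J. \<nu> j)\<bar>}
      \<le> 2 * exp (-((real M * real n * a)\<^sup>2) / (2 * real (card J)))"
    unfolding rs_eq \<nu>_def
    by (rule sum_tail[OF JI _ \<open>J \<noteq> {}\<close>]) (use apos n M in \<open>auto simp: J_def\<close>)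
  then have "measure (reward_space K M mu) {\<omega> \<in> space (reward_space K M mu). a \<le> \<bar>glob_emp_mean M \<omega> k n - (\<Sum>m<M. mu k m) / real M\<bar>}
      \<le> 2 * exp (-((real M * real n * a)\<^sup>2) / (2 * real (card J)))"
    by (simp only: set_eq)
  also have "\<dots> = 2 / X" using ec(1) n M cardJ by simp
  also have "\<dots> = \<delta> / (4 * real K * (real n)\<^sup>2)" using \<delta> by (simp add: X_def field_simps)
  finally show ?thesis by (simp add: a_def)
qed

theorem theorem1:
  fixes K M :: nat and \<delta> :: real and mu :: "nat \<Rightarrow> nat \<Rightarrow> real"
    and kl :: "nat \<Rightarrow> nat" and kg :: nat
  assumes "K > 1" and "M > 1" and "0 < \<delta>" and "\<delta> < 1"
    and "\<forall>m<M. kl m < K \<and> (\<forall>j<K. j \<noteq> kl m \<longrightarrow> mu j m < mu (kl m) m)"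
    and "kg < K \<and> (\<forall>j<K. j \<noteq> kg \<longrightarrow>
           (\<Sum>m<M. mu j m) / real M < (\<Sum>m<M. mu kg m) / real M)"
  shows "measure (reward_space K M mu)
           {\<omega> \<in> space (reward_space K M mu). fedelim_correct K M \<delta> kl kg \<omega>} \<ge> 1 - \<delta>"
proof -
  let ?P = "reward_space K M mu"
  have pN: "prob_space (density lborel (normal_density (mu k m) 1))" for k m
    by (rule prob_space_normal_density) simp
  interpret P: prob_space ?P unfolding reward_space_def
    by (rule prob_space_PiM) (auto simp: pN split: prod.split)
  have K0: "K > 0" and M0: "M > 0" using assms by auto
  define Al where "Al k m n = {\<omega> \<in> space ?P. alpha_l K M \<delta> (Suc n) \<le> \<bar>emp_mean \<omega> k m (Suc n) - mu k m\<bar>}" for k m n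
  define Ag where "Ag k n = {\<omega> \<in> space ?P. alpha_g K M \<delta> (Suc n) \<le> \<bar>glob_emp_mean M \<omega> k (Suc n) - (\<Sum>m<M. mu k m) / real M\<bar>}" for k n
  define B where "B n = (\<Union>k\<in>{..<K}. \<Union>m\<in>{..<M}. Al k m n) \<union> (\<Union>k\<in>{..<K}. Ag k n)" for n
  have Al_sets: "Al k m n \<in> sets ?P" if "k < K" "m < M" for k m n
    unfolding Al_def using emp_mean_meas[OF that, where mu=mu and n="Suc n"]
    by (intro borel_measurable_le borel_measurable_const borel_measurable_abs borel_measurable_diff) auto
  have Ag_sets: "Ag k n \<in> sets ?P" if "k < K" for k n
    unfolding Ag_def using glob_emp_mean_meas[OF that, where M=M and mu=mu and n="Suc n"]
    by (intro borel_measurable_le borel_measurable_const borel_measurable_abs borel_measurable_diff) auto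
  have B_sets: "B n \<in> sets ?P" for n
    unfolding B_def using Al_sets Ag_sets by auto
  have Al_le: "measure ?P (Al k m n) \<le> \<delta> / (4 * real K * real M * (real (Suc n))\<^sup>2)" if "k < K" "m < M" for k m n
    unfolding Al_def by (rule tail_l) (use that assms in auto)
  have Ag_le: "measure ?P (Ag k n) \<le> \<delta> / (4 * real K * (real (Suc n))\<^sup>2)" if "k < K" for k n
    unfolding Ag_def by (rule tail_g) (use that assms in auto)
  have B_le: "measure ?P (B n) \<le> \<delta> * (1 / real (Suc n) - 1 / real (Suc (Suc n)))" for n
  proof -
    define s where "s = real (Suc n)"
    have s: "s \<ge> 1" by (simp add: s_def)
    have "measure ?P (\<Union>k\<in>{..<K}. \<Union>m\<in>{..<M}. Al k m n) \<le> (\<Sum>k<K. measure ?P (\<Union>m\<in>{..<M}. Al k m n))"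
      by (rule measure_UNION_le) (use Al_sets in auto)
    also have "\<dots> \<le> (\<Sum>k<K. \<Sum>m<M. measure ?P (Al k m n))"
      by (intro sum_mono measure_UNION_le) (use Al_sets in auto)
    also have "\<dots> \<le> (\<Sum>k<K. \<Sum>m<M. \<delta> / (4 * real K * real M * s\<^sup>2))"
      by (intro sum_mono) (use Al_le in \<open>auto simp: s_def\<close>)
    also have "\<dots> = \<delta> / (4 * s\<^sup>2)" using K0 M0 by simp
    finally have 1: "measure ?P (\<Union>k\<in>{..<K}. \<Union>m\<in>{..<M}. Al k m n) \<le> \<delta> / (4 * s\<^sup>2)" .
    have "measure ?P (\<Union>k\<in>{..<K}. Ag k n) \<le> (\<Sum>k<K. measure ?P (Ag k n))"
      by (rule measure_UNION_le) (use Ag_sets in auto)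
    also have "\<dots> \<le> (\<Sum>k<K. \<delta> / (4 * real K * s\<^sup>2))"
      by (intro sum_mono) (use Ag_le in \<open>auto simp: s_def\<close>)
    also have "\<dots> = \<delta> / (4 * s\<^sup>2)" using K0 by simp
    finally have 2: "measure ?P (\<Union>k\<in>{..<K}. Ag k n) \<le> \<delta> / (4 * s\<^sup>2)" .
    have "measure ?P (B n) \<le> measure ?P (\<Union>k\<in>{..<K}. \<Union>m\<in>{..<M}. Al k m n) + measure ?P (\<Union>k\<in>{..<K}. Ag k n)"
      unfolding B_def by (rule measure_Un_le) (use Al_sets Ag_sets in auto)
    also have "\<dots> \<le> \<delta> / (2 * s\<^sup>2)" using 1 2 by simp
    also have "\<dots> \<le> \<delta> / (s * (s + 1))"
      using s assms by (intro divide_left_mono) (auto simp: power2_eq_square intro!: mult_pos_pos)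
    also have "\<dots> = \<delta> * (1 / s - 1 / (s + 1))" using s by (simp add: field_simps)
    finally show ?thesis by (simp add: s_def)
  qed
  have tel: "(\<lambda>n. 1 / real (Suc n) - 1 / real (Suc (Suc n))) sums 1"
  proof -
    have "(\<lambda>n. 1 / real (Suc n)) \<longlonglongrightarrow> 0" using LIMSEQ_inverse_real_of_nat by (simp add: inverse_eq_divide)
    from telescope_sums'[OF this] show ?thesis by simp
  qed
  have sd: "(\<lambda>n. \<delta> * (1 / real (Suc n) - 1 / real (Suc (Suc n)))) sums (\<delta> * 1)"
    by (rule sums_mult[OF tel])
  have nn: "0 \<le> measure ?P (B n)" for n by simp
  have summ: "summable (\<lambda>n. measure ?P (B n))"
    by (rule summable_comparison_test'[OF sums_summable[OF sd]]) (use B_le nn in auto)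
  have "measure ?P (\<Union>n. B n) \<le> (\<Sum>n. measure ?P (B n))"
    by (rule P.finite_measure_subadditive_countably) (use B_sets summ in auto)
  also have "\<dots> \<le> (\<Sum>n. \<delta> * (1 / real (Suc n) - 1 / real (Suc (Suc n))))"
    by (rule suminf_le) (use B_le summ sums_summable[OF sd] in auto)
  also have "\<dots> = \<delta>" using sums_unique[OF sd] by simp
  finally have Bd: "measure ?P (\<Union>n. B n) \<le> \<delta>" .
  have sub: "space ?P - (\<Union>n. B n) \<subseteq> {\<omega> \<in> space ?P. fedelim_correct K M \<delta> kl kg \<omega>}"
  proof safe
    fix \<omega> assume \<omega>: "\<omega> \<in> space ?P" and nb: "\<omega> \<notin> (\<Union>n. B n)"
    show "fedelim_correct K M \<delta> kl kg \<omega>"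
    proof (rule good_correct[OF assms(1,2,3,5,6)])
      fix n k m assume "k < K" "m < M"
      then have "\<omega> \<notin> Al k m n" using nb by (auto simp: B_def)
      then show "\<bar>emp_mean \<omega> k m (Suc n) - mu k m\<bar> < alpha_l K M \<delta> (Suc n)" using \<omega> by (auto simp: Al_def)
    next
      fix n k assume "k < K"
      then have "\<omega> \<notin> Ag k n" using nb by (auto simp: B_def)
      then show "\<bar>glob_emp_mean M \<omega> k (Suc n) - (\<Sum>m<M. mu k m) / real M\<bar> < alpha_g K M \<delta> (Suc n)" using \<omega> by (auto simp: Ag_def)
    qed
  qed
  have UB: "(\<Union>n. B n) \<in> sets ?P" using B_sets by auto
  have "1 - \<delta> \<le> 1 - measure ?P (\<Union>n. B n)" using Bd by simp
  also have "\<dots> = measure ?P (space ?P - (\<Union>n. B n))" using P.prob_compl[OF UB] by simp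
  also have "\<dots> \<le> measure ?P {\<omega> \<in> space ?P. fedelim_correct K M \<delta> kl kg \<omega>}"
    by (rule P.finite_measure_mono[OF sub correct_meas])
  finally show ?thesis .
qed

end
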